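(* Let $X$ be a finite set of proposals with $|X|\geq 3$. No divisiveness selection function $\Delta$ on $X$ satisfies both Pareto Efficiency and Weak Position Unanimity.
   Context: $X!$ is the set of strict linear orders on $X$; a profile is a function $R:N\to X!$ with $N\subset\mathbb{N}$ finite and nonempty. A divisiveness selection function (DSF) maps every profile to a nonempty subset of $X$. A proposal $x$ occurs in the same position throughout $R$ if the number of proposals ranked above $x$ is the same in every agent's ranking. A proposal $x$ is Pareto-dominated in $R$ if there is a proposal $y$ that every agent in $N$ ranks above $x$. Pareto Efficiency: $x\notin\Delta(R)$ for every profile $R$ and every Pareto-dominated proposal $x$ in $R$. Weak Position Unanimity: for every profile $R$ and every proposal $x$ occurring in the same position throughout $R$, either $x\notin\Delta(R)$ or $\Delta(R)=X$. *)

theory Defs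
  imports Main
begin

text \<open>Convention: for a ranking r, (a, b) \<in> r means that a is ranked above b.\<close>

definition strict_lin_orders :: "'a set \<Rightarrow> 'a rel set" where
  "strict_lin_orders X = {r. r \<subseteq> X \<times> X \<and> strict_linear_order_on X r}"

definition profiles :: "'a set \<Rightarrow> (nat set \<times> (nat \<Rightarrow> 'a rel)) set" where
  "profiles X = {(N, R). finite N \<and> N \<noteq> {} \<and> (\<forall>i\<in>N. R i \<in> strict_lin_orders X)
                        \<and> (\<forall>i. i \<notin> N \<longrightarrow> R i = {})}"

definition is_DSF :: "'a set \<Rightarrow> (nat set \<times> (nat \<Rightarrow> 'a rel) \<Rightarrow> 'a set) \<Rightarrow> bool" where
  "is_DSF X D \<longleftrightarrow> (\<forall>P\<in>profiles X. D P \<noteq> {} \<and> D P \<subseteq> X)"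

definition same_position :: "nat set \<times> (nat \<Rightarrow> 'a rel) \<Rightarrow> 'a \<Rightarrow> bool" where
  "same_position P x \<longleftrightarrow>
     (\<exists>k. \<forall>i\<in>fst P. card {y. (y, x) \<in> snd P i} = k)"

definition pareto_dominated :: "nat set \<times> (nat \<Rightarrow> 'a rel) \<Rightarrow> 'a \<Rightarrow> bool" where
  "pareto_dominated P x \<longleftrightarrow> (\<exists>y. \<forall>i\<in>fst P. (y, x) \<in> snd P i)"

definition pareto_efficiency :: "'a set \<Rightarrow> (nat set \<times> (nat \<Rightarrow> 'a rel) \<Rightarrow> 'a set) \<Rightarrow> bool" where
  "pareto_efficiency X D \<longleftrightarrow>
     (\<forall>P\<in>profiles X. \<forall>x\<in>X. pareto_dominated P x \<longrightarrow> x \<notin> D P)"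

definition weak_position_unanimity :: "'a set \<Rightarrow> (nat set \<times> (nat \<Rightarrow> 'a rel) \<Rightarrow> 'a set) \<Rightarrow> bool" where
  "weak_position_unanimity X D \<longleftrightarrow>
     (\<forall>P\<in>profiles X. \<forall>x\<in>X. same_position P x \<longrightarrow> x \<notin> D P \<or> D P = X)"

end

theory Submission
  imports Defs
begin

theorem theorem1:
  fixes X :: "'a set"
  assumes "finite X" and "card X \<ge> 3"
  shows "\<not> (\<exists>D. is_DSF X D \<and> pareto_efficiency X D \<and> weak_position_unanimity X D)"
proof
  assume "\<exists>D. is_DSF X D \<and> pareto_efficiency X D \<and> weak_position_unanimity X D"
  then obtain D where dsf: "is_DSF X D" and pe: "pareto_efficiency X D"
    and wpu: "weak_position_unanimity X D" by blast
  obtain f :: "'a \<Rightarrow> nat" and n where inj: "inj_on f X"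
    using finite_imp_inj_to_nat_seg[OF assms(1)] by blast
  define r where "r = {(a, b). a \<in> X \<and> b \<in> X \<and> f a < f b}"
  have slo: "r \<in> strict_lin_orders X"
    unfolding strict_lin_orders_def strict_linear_order_on_def r_def
    using inj by (auto simp: trans_def irrefl_def total_on_def inj_on_def) (metis linorder_neqE_nat)
  define P where "P = ({0::nat}, (\<lambda>i::nat. if i = 0 then r else {}))"
  have PP: "P \<in> profiles X" unfolding profiles_def P_def using slo by auto
  have "card X \<ge> 2" using assms(2) by simp
  then obtain a b where ab: "a \<in> X" "b \<in> X" "a \<noteq> b"
    by (metis card_2_iff' card_le_Suc0_iff_eq le_Suc_eq not_less_eq_eq numeral_2_eq_2 assms(1) Suc_n_not_le_n)
  then have fab: "f a \<noteq> f b" using inj by (auto simp: inj_on_def)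
  define x where "x = (if f a < f b then b else a)"
  have xX: "x \<in> X" using ab x_def by auto
  have pd: "pareto_dominated P x"
    unfolding pareto_dominated_def P_def x_def r_def using ab fab
    by (cases "f a < f b") auto
  have xnot: "x \<notin> D P" using pe PP xX pd unfolding pareto_efficiency_def by blast
  obtain z where z: "z \<in> D P" using dsf PP unfolding is_DSF_def by blast
  have zX: "z \<in> X" using z dsf PP unfolding is_DSF_def by blast
  have sp: "same_position P z" unfolding same_position_def P_def by auto
  have "D P = X" using wpu PP zX sp z unfolding weak_position_unanimity_def by blast
  then show False using xnot xX by blast
qed

end
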